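(* Let $T$ be a finite triangulation of a $d$-dimensional manifold $N$, equipped with a branching structure. Let $T^k$ denote its set of $k$-simplices, and let $\tilde a\in C^0(N,\mathbb{Z}_2)$. Then, modulo 2, $$\sum_{k=0}^{d}\ \sum_{\langle v_0\cdots v_k\rangle\in T^k}\tilde a(v_0)\tilde a(v_1)\cdots\tilde a(v_k)\ \equiv\ \sum_{j=0}^{d} w_{d-j}\big(\tilde a\cup\underbrace{\delta\tilde a\cup\cdots\cup\delta\tilde a}_{j\text{ times}}\big),$$ where $w_{d-j}\in C_j(N,\mathbb{Z}_2)$ are the chains defined in the context, and $w(\phi)$ denotes the chain–cochain pairing.
   Context: Simplices are written $\langle v_0\cdots v_q\rangle$ with vertices in the order given by the branching structure. The cup product of $\mathbb{Z}_2$-cochains is $$(\alpha\cup\beta)(v_0\cdots v_{p+q})=\alpha(v_0\cdots v_p)\beta(v_p\cdots v_{p+q}),$$ and $(\delta\tilde a)(v_0v_1)=\tilde a(v_0)+\tilde a(v_1)$. For a $q$-simplex $t=\langle 0\,1\cdots q\rangle$ (vertices labelled in branching order) define chains $\partial_p(t)\in C_p(N,\mathbb{Z}_2)$ as follows. - If $p=2k$ is even, $\partial_p(t)=\sum\langle 0,i_1,i_1{+}1,i_2,i_2{+}1,\dots,i_k,i_k{+}1\rangle$, summed over integers with $1\le i_1$, $i_{r+1}\ge i_r+2$ and $i_k\le q-1$. - If $p=2k+1$ is odd, $\partial_p(t)=\sum\langle 0,i_1,i_1{+}1,\dots,i_k,i_k{+}1,q\rangle$, summed over integers with $1\le i_1$,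 $i_{r+1}\ge i_r+2$ and $i_k\le q-2$. In particular $\partial_0(t)=\langle0\rangle$ and $\partial_1(t)=\langle0q\rangle$ for $q\ge1$. Then $$w_{d-p}=\sum_{q\ge p}\ \sum_{t\in T^q}\partial_p(t)\in C_p(N,\mathbb{Z}_2).$$ In particular $w_0$ is the sum of all $d$-simplices. *)

theory Defs
  imports Main "HOL-Library.Z2"
begin

text \<open>A simplex is represented
  by the list of its vertices in branching order; faces are (nonempty) subsequences.
  Requiring the complex to be closed under taking subsequences and that each vertex
  set occurs with only one ordering is exactly a branching structure (a local
  ordering of the vertices of every simplex compatible with passing to faces).\<close>

definition branched_complex :: "'v list set \<Rightarrow> bool" where
  "branched_complex K \<longleftrightarrow> finite K
     \<and> (\<forall>s\<in>K. s \<noteq> [] \<and> distinct s)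
     \<and> (\<forall>s\<in>K. \<forall>I. nths s I \<noteq> [] \<longrightarrow> nths s I \<in> K)
     \<and> (\<forall>s\<in>K. \<forall>t\<in>K. set s = set t \<longrightarrow> s = t)"

definition simplices :: "'v list set \<Rightarrow> nat \<Rightarrow> 'v list set" where
  "simplices K k = {s \<in> K. length s = Suc k}"

definition cup :: "nat \<Rightarrow> ('v list \<Rightarrow> bit) \<Rightarrow> ('v list \<Rightarrow> bit) \<Rightarrow> 'v list \<Rightarrow> bit" where
  "cup p \<alpha> \<beta> s = \<alpha> (take (Suc p) s) * \<beta> (drop p s)"

definition cochain0 :: "('v \<Rightarrow> bit) \<Rightarrow> 'v list \<Rightarrow> bit" where
  "cochain0 a s = a (s ! 0)"

definition delta0 :: "('v \<Rightarrow> bit) \<Rightarrow> 'v list \<Rightarrow> bit" where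
  "delta0 a s = a (s ! 0) + a (s ! 1)"

fun a_cup_delta :: "('v \<Rightarrow> bit) \<Rightarrow> nat \<Rightarrow> 'v list \<Rightarrow> bit" where
  "a_cup_delta a 0 = cochain0 a"
| "a_cup_delta a (Suc j) = cup j (a_cup_delta a j) (delta0 a)"

text \<open>Index sets for the chains \<partial>_p(t) of a q-simplex t = <0 1 ... q>.\<close>
definition idx_set :: "nat \<Rightarrow> nat \<Rightarrow> nat list set" where
  "idx_set p q = {is. length is = p div 2 \<and> sorted_wrt (\<lambda>x y. x + 2 \<le> y) is
       \<and> (\<forall>i\<in>set is. 1 \<le> i \<and> (if even p then i + 1 \<le> q else i + 2 \<le> q))}"

definition idx_vertices :: "nat \<Rightarrow> nat \<Rightarrow> nat list \<Rightarrow> nat list" where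
  "idx_vertices p q is = 0 # concat (map (\<lambda>i. [i, Suc i]) is) @ (if even p then [] else [q])"

text \<open>The p-chain \<partial>_p(t) (as a Z_2 coefficient function on simplices), for a simplex t
  given by its ordered vertex list (so q = length t - 1).\<close>
definition d_chain :: "nat \<Rightarrow> 'v list \<Rightarrow> 'v list \<Rightarrow> bit" where
  "d_chain p t \<sigma> = (\<Sum>is\<in>idx_set p (length t - 1).
       if map (\<lambda>j. t ! j) (idx_vertices p (length t - 1) is) = \<sigma> then 1 else 0)"

text \<open>\<open>w_chain K j\<close> is the j-chain w_{d-j} = \<Sum>_{q\<ge>j} \<Sum>_{t\<in>T^q} \<partial>_j(t).\<close>
definition w_chain :: "'v list set \<Rightarrow> nat \<Rightarrow> 'v list \<Rightarrow> bit" where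
  "w_chain K j \<sigma> = (\<Sum>t\<in>{t\<in>K. j < length t}. d_chain j t \<sigma>)"

definition pairing :: "'v list set \<Rightarrow> nat \<Rightarrow> ('v list \<Rightarrow> bit) \<Rightarrow> ('v list \<Rightarrow> bit) \<Rightarrow> bit" where
  "pairing K j c \<phi> = (\<Sum>\<sigma>\<in>simplices K j. c \<sigma> * \<phi> \<sigma>)"

end

theory Submission imports Defs begin

definition E :: "nat \<Rightarrow> nat list set" where
  "E q = {is. sorted_wrt (\<lambda>x y. x + 2 \<le> y) is \<and> (\<forall>i\<in>set is. 1 \<le> i \<and> i + 1 \<le> q)}"

definition cc :: "(nat \<Rightarrow> bit) \<Rightarrow> nat \<Rightarrow> bit" where
  "cc x i = (1 + x i) * x (Suc i)"

definition hh :: "(nat \<Rightarrow> bit) \<Rightarrow> nat \<Rightarrow> bit" where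
  "hh x q = (\<Sum>is\<in>E q. \<Prod>i\<leftarrow>is. cc x i)"

lemma sep_bound:
  "sorted_wrt (\<lambda>x y. x + 2 \<le> y) is \<Longrightarrow> (\<forall>i\<in>set is. lo \<le> i \<and> i < hi) \<Longrightarrow> is \<noteq> []
   \<Longrightarrow> 2 * length is + lo \<le> hi + 1"
proof (induction "is" arbitrary: lo)
  case Nil then show ?case by simp
next
  case (Cons i rest)
  show ?case
  proof (cases "rest = []")
    case True then show ?thesis using Cons.prems by auto
  next
    case False
    have "2 * length rest + (i+2) \<le> hi + 1"
      using Cons.IH[of "i+2"] Cons.prems False by auto
    then show ?thesis using Cons.prems by auto
  qed
qed

lemma E_len: "is \<in> E q \<Longrightarrow> 2 * length is \<le> q"
proof -
  assume a: "is \<in> E q"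
  then have "sorted_wrt (\<lambda>x y. x + 2 \<le> y) is" "\<forall>i\<in>set is. 1 \<le> i \<and> i < q"
    unfolding E_def by auto
  then show ?thesis using sep_bound[of "is" 1 q] by (cases "is = []") auto
qed

lemma E_finite: "finite (E q)"
proof -
  have "E q \<subseteq> {xs. set xs \<subseteq> {1..q} \<and> length xs \<le> q}"
    using E_len by (fastforce simp: E_def)
  then show ?thesis using finite_lists_length_le[of "{1..q}" q] finite_subset by blast
qed

lemma E_small: "q \<le> 1 \<Longrightarrow> E q = {[]}"
proof -
  assume q: "q \<le> 1"
  have "is = []" if "is \<in> E q" for "is"
    using that q unfolding E_def by (cases "is") auto
  then show ?thesis by (auto simp: E_def)
qed

lemma E_0: "E 0 = {[]}" and E_1: "E (Suc 0) = {[]}"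
  using E_small by auto

lemma E_SS: "E (Suc (Suc q)) = E (Suc q) \<union> (\<lambda>is. is @ [Suc q]) ` E q"
proof
  show "E (Suc (Suc q)) \<subseteq> E (Suc q) \<union> (\<lambda>is. is @ [Suc q]) ` E q"
  proof
    fix "is" assume a: "is \<in> E (Suc (Suc q))"
    have srt: "sorted_wrt (\<lambda>x y. x + 2 \<le> y) is" and bnd: "\<forall>i\<in>set is. 1 \<le> i \<and> i + 1 \<le> Suc (Suc q)"
      using a unfolding E_def by auto
    show "is \<in> E (Suc q) \<union> (\<lambda>is. is @ [Suc q]) ` E q"
    proof (cases "Suc q \<in> set is")
      case False
      have "\<forall>i\<in>set is. 1 \<le> i \<and> i + 1 \<le> Suc q"
      proof
        fix i assume i: "i \<in> set is"
        then have "i \<noteq> Suc q" using False by blast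
        then show "1 \<le> i \<and> i + 1 \<le> Suc q" using bnd i by auto
      qed
      then have "is \<in> E (Suc q)" using srt unfolding E_def by blast
      then show ?thesis by blast
    next
      case True
      then obtain ys zs where yz: "is = ys @ Suc q # zs" by (meson split_list)
      have s2: "sorted_wrt (\<lambda>x y. x + 2 \<le> y) ys" "\<forall>y\<in>set ys. y + 2 \<le> Suc q"
        "\<forall>z\<in>set zs. Suc q + 2 \<le> z"
        using srt unfolding yz sorted_wrt_append by auto
      have "zs = []"
      proof (rule ccontr)
        assume "zs \<noteq> []"
        then obtain z where z: "z \<in> set zs" using last_in_set by blast
        then have "z \<in> set is" unfolding yz by simp
        then have "z + 1 \<le> Suc (Suc q)" using bnd by blast
        moreover have "Suc q + 2 \<le> z" using s2(3) z by blast
        ultimately show False by simp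
      qed
      have "\<forall>y\<in>set ys. 1 \<le> y \<and> y + 1 \<le> q"
      proof
        fix y assume y: "y \<in> set ys"
        then have "y \<in> set is" unfolding yz by simp
        then show "1 \<le> y \<and> y + 1 \<le> q" using bnd s2(2) y by force
      qed
      then have "ys \<in> E q" using s2(1) unfolding E_def by blast
      then show ?thesis using yz \<open>zs = []\<close> by blast
    qed
  qed
next
  show "E (Suc q) \<union> (\<lambda>is. is @ [Suc q]) ` E q \<subseteq> E (Suc (Suc q))"
  proof
    fix "is" assume "is \<in> E (Suc q) \<union> (\<lambda>is. is @ [Suc q]) ` E q"
    then show "is \<in> E (Suc (Suc q))"
    proof
      assume "is \<in> E (Suc q)" then show ?thesis unfolding E_def by auto
    next
      assume "is \<in> (\<lambda>is. is @ [Suc q]) ` E q"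
      then obtain ys where ys: "ys \<in> E q" "is = ys @ [Suc q]" by blast
      then show ?thesis unfolding E_def by (auto simp: sorted_wrt_append)
    qed
  qed
qed

lemma hh_SS: "hh x (Suc (Suc q)) = hh x (Suc q) + hh x q * cc x (Suc q)"
proof -
  have d: "E (Suc q) \<inter> (\<lambda>is. is @ [Suc q]) ` E q = {}"
    by (auto simp: E_def)
  have inj: "inj_on (\<lambda>is. is @ [Suc q]) (E q)" by (auto intro: inj_onI)
  have "hh x (Suc (Suc q)) = hh x (Suc q) + (\<Sum>is\<in>(\<lambda>is. is @ [Suc q]) ` E q. \<Prod>i\<leftarrow>is. cc x i)"
    unfolding hh_def E_SS by (rule sum.union_disjoint) (auto simp: E_finite d)
  also have "(\<Sum>is\<in>(\<lambda>is. is @ [Suc q]) ` E q. \<Prod>i\<leftarrow>is. cc x i) = hh x q * cc x (Suc q)"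
    unfolding hh_def sum.reindex[OF inj] sum_distrib_right by (simp only: o_def map_append prod_list.append) simp
  finally show ?thesis .
qed

definition PP :: "(nat \<Rightarrow> bit) \<Rightarrow> nat \<Rightarrow> bit" where
  "PP x q = (\<Prod>i\<in>{1..<q}. 1 + cc x i)"

lemma hh_PP: "hh x q = PP x q \<and> hh x (Suc q) = PP x (Suc q)"
proof (induction q)
  case 0 then show ?case by (simp add: hh_def PP_def E_0 E_1)
next
  case (Suc q)
  have c: "cc x q * cc x (Suc q) = 0"
    unfolding cc_def by (cases "x (Suc q)") auto
  have "PP x (Suc (Suc q)) = PP x (Suc q) * (1 + cc x (Suc q))"
    unfolding PP_def by (simp add: prod.atLeastLessThan_Suc)
  also have "\<dots> = PP x (Suc q) + PP x q * cc x (Suc q)"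
  proof (cases q)
    case 0 then show ?thesis by (simp add: PP_def)
  next
    case (Suc m)
    have "PP x (Suc q) = PP x q * (1 + cc x q)"
      unfolding PP_def using Suc by (simp add: prod.atLeastLessThan_Suc)
    then show ?thesis using c by (cases "PP x q"; cases "cc x q"; cases "cc x (Suc q)"; simp)
  qed
  finally show ?case using Suc hh_SS[of x q] by simp
qed

lemma key_identity:
  "q \<ge> 1 \<Longrightarrow> hh x q + (1 + x q) * hh x (q - 1) = (\<Prod>i\<in>{1..q}. x i)"
proof (induction q rule: nat_induct_at_least)
  case base
  then show ?case using hh_PP[of x 0] by (simp add: PP_def)
next
  case (Suc q)
  let ?P = "PP x"
  have hq: "hh x q = ?P q" "hh x (Suc q) = ?P (Suc q)" "hh x (q - 1) = ?P (q - 1)"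
    using hh_PP by auto
  have s1: "?P (Suc q) = ?P q * (1 + cc x q)"
    unfolding PP_def using Suc by (simp add: prod.atLeastLessThan_Suc)
  have "hh x (Suc q) + (1 + x (Suc q)) * hh x (Suc q - 1)
      = (hh x q + (1 + x q) * hh x (q - 1)) * x (Suc q)"
  proof (cases "q = 1")
    case True
    then show ?thesis unfolding hq s1 cc_def
      by (simp add: PP_def hh_def E_0 E_1; cases "x (Suc q)"; cases "x q"; simp)
  next
    case False
    then have s0: "?P q = ?P (q - 1) * (1 + cc x (q - 1))"
      unfolding PP_def using Suc by (cases q) (auto simp: prod.atLeastLessThan_Suc)
    have qq: "Suc (q - Suc 0) = q" using Suc by simp
    show ?thesis unfolding hq s1 s0 cc_def qq
      by (cases "x (Suc q)"; cases "x q"; cases "x (q - 1)"; cases "?P (q - 1)"; simp add: hq s0 cc_def qq)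
  qed
  moreover have "(\<Prod>i\<in>{1..Suc q}. x i) = (\<Prod>i\<in>{1..q}. x i) * x (Suc q)"
    using Suc(1) by (subst prod.cl_ivl_Suc) auto
  ultimately show ?case using Suc(2) by metis
qed

fun pf :: "bit \<Rightarrow> bit list \<Rightarrow> bit" where
  "pf b [] = 1"
| "pf b (y # ys) = (b + y) * pf y ys"

lemma cup_eval:
  "Suc j \<le> length s \<Longrightarrow> a_cup_delta a j s = a (s ! 0) * (\<Prod>r<j. a (s ! r) + a (s ! Suc r))"
proof (induction j arbitrary: s)
  case 0 then show ?case by (simp add: cochain0_def)
next
  case (Suc j)
  have "a_cup_delta a j (take (Suc j) s) = a (s ! 0) * (\<Prod>r<j. a (s ! r) + a (s ! Suc r))"
    using Suc.IH[of "take (Suc j) s"] Suc.prems by simp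
  moreover have "delta0 a (drop j s) = a (s ! j) + a (s ! Suc j)"
    using Suc.prems by (simp add: delta0_def)
  ultimately show ?case by (simp add: cup_def mult.assoc)
qed

lemma pf_prod: "pf b ys = (\<Prod>r<length ys. (b # ys) ! r + (b # ys) ! Suc r)"
proof (induction ys arbitrary: b)
  case Nil then show ?case by simp
next
  case (Cons y ys)
  show ?case by (simp add: Cons.IH prod.lessThan_Suc_shift del: prod.lessThan_Suc)
qed

lemma acd_pf:
  assumes "length s = Suc j"
  shows "a_cup_delta a j s = a (hd s) * pf (a (hd s)) (map a (tl s))"
proof -
  obtain h u where s: "s = h # u" using assms by (cases s) auto
  have "pf (a h) (map a u) = (\<Prod>r<j. a (s ! r) + a (s ! Suc r))"
    unfolding pf_prod using assms s
    by (intro prod.cong) (auto simp: nth_Cons' nth_map)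
  then show ?thesis using cup_eval[of j s a] assms s by simp
qed

lemma pf_b: "b * pf b ys = b * pf 1 ys"
  by (cases b) auto

lemma pf_concat:
  "pf 1 (concat (map (\<lambda>i. [x i, x (Suc i)]) is) @ rest) = (\<Prod>i\<leftarrow>is. cc x i) * pf 1 rest"
proof (induction "is")
  case Nil then show ?case by simp
next
  case (Cons i "is")
  have "pf 1 (concat (map (\<lambda>i. [x i, x (Suc i)]) (i # is)) @ rest)
     = (1 + x i) * ((x i + x (Suc i)) * pf (x (Suc i)) (concat (map (\<lambda>i. [x i, x (Suc i)]) is) @ rest))"
    by simp
  also have "\<dots> = cc x i * pf 1 (concat (map (\<lambda>i. [x i, x (Suc i)]) is) @ rest)"
    unfolding cc_def by (cases "x i"; cases "x (Suc i)"; simp)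
  finally show ?case using Cons.IH by (simp add: mult.assoc)
qed

lemma idx_vertices_length: "length is = p div 2 \<Longrightarrow> length (idx_vertices p q is) = Suc p"
proof -
  assume "length is = p div 2"
  moreover have "length (concat (map (\<lambda>i. [i, Suc i]) is)) = 2 * length is"
    by (induction "is") auto
  ultimately show ?thesis unfolding idx_vertices_def by auto
qed

lemma acd_value:
  assumes "length is = j div 2"
  shows "a_cup_delta a j (map (\<lambda>i. t ! i) (idx_vertices j q is))
       = a (t ! 0) * (\<Prod>i\<leftarrow>is. cc (\<lambda>i. a (t ! i)) i) * (if even j then 1 else 1 + a (t ! q))"
proof -
  let ?x = "\<lambda>i. a (t ! i)"
  let ?s = "map (\<lambda>i. t ! i) (idx_vertices j q is)"
  have len: "length ?s = Suc j" using idx_vertices_length[OF assms] by simp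
  have hd: "hd ?s = t ! 0" by (simp add: idx_vertices_def)
  have tl: "map a (tl ?s) = concat (map (\<lambda>i. [?x i, ?x (Suc i)]) is) @ (if even j then [] else [?x q])"
    by (simp add: idx_vertices_def map_concat o_def)
  have "a_cup_delta a j ?s = a (t ! 0) * pf 1 (concat (map (\<lambda>i. [?x i, ?x (Suc i)]) is) @ (if even j then [] else [?x q]))"
    unfolding acd_pf[OF len] hd tl by (rule pf_b)
  also have "\<dots> = a (t ! 0) * ((\<Prod>i\<leftarrow>is. cc ?x i) * pf 1 (if even j then [] else [?x q]))"
    by (subst pf_concat[of ?x]) (rule refl)
  also have "\<dots> = a (t ! 0) * (\<Prod>i\<leftarrow>is. cc ?x i) * (if even j then 1 else 1 + ?x q)"
    by (cases "even j") (simp_all only: pf.simps mult.assoc add_0_right mult_1_right if_True if_False)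
  finally show ?thesis .
qed

lemma parity_split:
  "(\<Sum>j<n. f j) = (\<Sum>k<(n+1) div 2. f (2*k)) + (\<Sum>k<n div 2. f (2*k+1))" for f :: "nat \<Rightarrow> 'a::comm_monoid_add"
proof (induction n)
  case 0 then show ?case by simp
next
  case (Suc n)
  show ?case
  proof (cases "even n")
    case True
    then obtain m where m: "n = 2*m" by blast
    have "(Suc n + 1) div 2 = Suc m" "Suc n div 2 = m" "(n+1) div 2 = m" "n div 2 = m" using m by auto
    then show ?thesis using Suc.IH m by (simp add: add_ac)
  next
    case False
    then obtain m where m: "n = 2*m+1" using oddE by blast
    have "(Suc n + 1) div 2 = Suc m" "Suc n div 2 = Suc m" "(n+1) div 2 = Suc m" "n div 2 = m" using m by auto
    then show ?thesis using Suc.IH m by (simp add: add_ac)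
  qed
qed

lemma idx_set_even: "idx_set (2*k) q = {is \<in> E q. length is = k}"
  unfolding idx_set_def E_def by auto

lemma idx_set_odd: "idx_set (2*k+1) q = {is \<in> E (q - 1). length is = k}"
  unfolding idx_set_def E_def by auto

lemma per_t:
  assumes "length t = Suc q"
  shows "(\<Sum>j<Suc q. \<Sum>is\<in>idx_set j q. a_cup_delta a j (map (\<lambda>i. t ! i) (idx_vertices j q is)))
       = (\<Prod>v\<leftarrow>t. a v)"
proof -
  let ?x = "\<lambda>i. a (t ! i)"
  let ?F = "\<lambda>j. \<Sum>is\<in>idx_set j q. a_cup_delta a j (map (\<lambda>i. t ! i) (idx_vertices j q is))"
  have ev: "(\<Sum>k<(Suc q + 1) div 2. ?F (2*k)) = ?x 0 * hh ?x q"
  proof -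
    have "(\<Sum>k<(Suc q + 1) div 2. ?F (2*k))
        = (\<Sum>k<(Suc q + 1) div 2. \<Sum>is\<in>{is \<in> E q. length is = k}. ?x 0 * (\<Prod>i\<leftarrow>is. cc ?x i))"
      unfolding idx_set_even
    proof (intro sum.cong refl)
      fix k "is" assume "is \<in> {is \<in> E q. length is = k}"
      then have "length is = (2*k) div 2" by simp
      from acd_value[OF this, of a t q]
      show "a_cup_delta a (2 * k) (map ((!) t) (idx_vertices (2 * k) q is)) = ?x 0 * (\<Prod>i\<leftarrow>is. cc ?x i)"
        by simp
    qed
    also have "\<dots> = (\<Sum>is\<in>E q. ?x 0 * (\<Prod>i\<leftarrow>is. cc ?x i))"
    proof (rule sum.group)
      show "length ` E q \<subseteq> {..<(Suc q + 1) div 2}"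
      proof
        fix l assume "l \<in> length ` E q"
        then obtain "is" where "is \<in> E q" "l = length is" by blast
        then have "2 * l \<le> q" using E_len by blast
        then show "l \<in> {..<(Suc q + 1) div 2}" by auto
      qed
    qed (auto simp: E_finite)
    finally show ?thesis unfolding hh_def sum_distrib_left .
  qed
  have od: "(\<Sum>k<Suc q div 2. ?F (2*k+1)) = (if q = 0 then 0 else ?x 0 * hh ?x (q - 1) * (1 + ?x q))"
  proof (cases "q = 0")
    case True then show ?thesis by simp
  next
    case False
    have "(\<Sum>k<Suc q div 2. ?F (2*k+1))
        = (\<Sum>k<Suc q div 2. \<Sum>is\<in>{is \<in> E (q - 1). length is = k}. ?x 0 * (\<Prod>i\<leftarrow>is. cc ?x i) * (1 + ?x q))"
      unfolding idx_set_odd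
    proof (intro sum.cong refl)
      fix k "is" assume "is \<in> {is \<in> E (q - 1). length is = k}"
      then have "length is = (2*k+1) div 2" by simp
      from acd_value[OF this, of a t q]
      show "a_cup_delta a (2 * k + 1) (map ((!) t) (idx_vertices (2 * k + 1) q is)) = ?x 0 * (\<Prod>i\<leftarrow>is. cc ?x i) * (1 + ?x q)"
        by simp
    qed
    also have "\<dots> = (\<Sum>is\<in>E (q - 1). ?x 0 * (\<Prod>i\<leftarrow>is. cc ?x i) * (1 + ?x q))"
    proof (rule sum.group)
      show "length ` E (q - 1) \<subseteq> {..<Suc q div 2}"
      proof
        fix l assume "l \<in> length ` E (q - 1)"
        then obtain "is" where "is \<in> E (q - 1)" "l = length is" by blast
        then have "2 * l \<le> q - 1" using E_len by blast
        then show "l \<in> {..<Suc q div 2}" using False by auto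
      qed
    qed (auto simp: E_finite)
    also have "\<dots> = ?x 0 * hh ?x (q - 1) * (1 + ?x q)"
      unfolding hh_def sum_distrib_left sum_distrib_right ..
    finally show ?thesis unfolding if_not_P[OF False] .
  qed
  have "(\<Sum>j<Suc q. ?F j) = ?x 0 * hh ?x q + (if q = 0 then 0 else ?x 0 * hh ?x (q - 1) * (1 + ?x q))"
    unfolding parity_split[of ?F] ev od ..
  also have "\<dots> = ?x 0 * (\<Prod>i\<in>{1..q}. ?x i)"
  proof (cases "q = 0")
    case True then show ?thesis by (simp add: hh_def E_0)
  next
    case False
    have "?x 0 * hh ?x q + ?x 0 * hh ?x (q - 1) * (1 + ?x q) = ?x 0 * (hh ?x q + (1 + ?x q) * hh ?x (q - 1))"
      by algebra
    moreover have "hh ?x q + (1 + ?x q) * hh ?x (q - 1) = (\<Prod>i\<in>{1..q}. ?x i)"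
      by (rule key_identity) (use False in simp)
    ultimately show ?thesis unfolding if_not_P[OF False] by (simp only:)
  qed
  also have "\<dots> = (\<Prod>i<Suc q. ?x i)"
  proof -
    have "(\<Prod>i\<in>insert 0 {1..q}. ?x i) = ?x 0 * (\<Prod>i\<in>{1..q}. ?x i)"
      by (subst prod.insert) auto
    moreover have "insert 0 {1..q} = {..<Suc q}" by auto
    ultimately show ?thesis by metis
  qed
  also have "\<dots> = (\<Prod>v\<leftarrow>t. a v)"
    using assms by (simp add: prod.list_conv_set_nth lessThan_atLeast0)
  finally show ?thesis .
qed


lemma map_nth_nths:
  "sorted_wrt (<) vs \<Longrightarrow> (\<forall>v\<in>set vs. v < length t) \<Longrightarrow> map (\<lambda>i. t ! i) vs = nths t (set vs)"
proof (induction t arbitrary: vs)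
  case Nil then show ?case by (cases vs) auto
next
  case (Cons x xs)
  have shift: "map (\<lambda>i. (x # xs) ! i) ws = map (\<lambda>i. xs ! i) (map (\<lambda>v. v - 1) ws)
      \<and> {j. Suc j \<in> set ws} = set (map (\<lambda>v. v - 1) ws)
      \<and> sorted_wrt (<) (map (\<lambda>v. v - 1) ws)
      \<and> (\<forall>v\<in>set (map (\<lambda>v. v - 1) ws). v < length xs)"
    if "\<forall>v\<in>set ws. 0 < v" "sorted_wrt (<) ws" "\<forall>v\<in>set ws. v < length (x # xs)" for ws
  proof (intro conjI)
    show "map (\<lambda>i. (x # xs) ! i) ws = map (\<lambda>i. xs ! i) (map (\<lambda>v. v - 1) ws)"
      unfolding map_map o_def
    proof (rule map_cong[OF refl])
      fix v assume "v \<in> set ws"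
      then have "0 < v" using that(1) by blast
      then show "(x # xs) ! v = xs ! (v - 1)" by (cases v) auto
    qed
    show "{j. Suc j \<in> set ws} = set (map (\<lambda>v. v - 1) ws)"
    proof (intro set_eqI iffI)
      fix j assume "j \<in> {j. Suc j \<in> set ws}"
      then have "Suc j \<in> set ws" by blast
      then show "j \<in> set (map (\<lambda>v. v - 1) ws)" by force
    next
      fix j assume "j \<in> set (map (\<lambda>v. v - 1) ws)"
      then obtain v where v: "v \<in> set ws" "j = v - 1" by auto
      then have "0 < v" using that(1) by blast
      then have "Suc j = v" using v by simp
      then show "j \<in> {j. Suc j \<in> set ws}" using v by simp
    qed
    show "sorted_wrt (<) (map (\<lambda>v. v - 1) ws)"
      unfolding sorted_wrt_map
    proof (rule sorted_wrt_mono_rel[OF _ that(2)])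
      fix u v assume "u \<in> set ws" "v \<in> set ws" "u < v"
      then show "u - 1 < v - 1" using that(1) by fastforce
    qed
    show "\<forall>v\<in>set (map (\<lambda>v. v - 1) ws). v < length xs"
      using that(1,3) by auto
  qed
  show ?case
  proof (cases "0 \<in> set vs")
    case True
    then obtain vs' where vs: "vs = 0 # vs'" using Cons.prems(1)
      by (cases vs) auto
    have pos: "\<forall>v\<in>set vs'. 0 < v" using Cons.prems(1) vs by auto
    have s': "sorted_wrt (<) vs'" "\<forall>v\<in>set vs'. v < length (x # xs)" using Cons.prems vs by auto
    note sh = shift[OF pos s']
    have se: "{j. Suc j \<in> set vs} = {j. Suc j \<in> set vs'}" using vs by auto
    have "nths (x # xs) (set vs) = x # nths xs {j. Suc j \<in> set vs'}"
      using vs se by (simp add: nths_Cons)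
    also have "\<dots> = x # nths xs (set (map (\<lambda>v. v - 1) vs'))" using sh by metis
    also have "\<dots> = x # map (\<lambda>i. xs ! i) (map (\<lambda>v. v - 1) vs')"
      using Cons.IH[of "map (\<lambda>v. v - 1) vs'"] sh by metis
    also have "\<dots> = x # map (\<lambda>i. (x # xs) ! i) vs'" using sh by metis
    also have "\<dots> = map (\<lambda>i. (x # xs) ! i) vs" using vs by simp
    finally show ?thesis by simp
  next
    case False
    then have pos: "\<forall>v\<in>set vs. 0 < v" by (metis gr0I)
    note sh = shift[OF pos Cons.prems]
    have "nths (x # xs) (set vs) = nths xs {j. Suc j \<in> set vs}"
      using False by (simp add: nths_Cons)
    also have "\<dots> = nths xs (set (map (\<lambda>v. v - 1) vs))" using sh by metis
    also have "\<dots> = map (\<lambda>i. xs ! i) (map (\<lambda>v. v - 1) vs)"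
      using Cons.IH[of "map (\<lambda>v. v - 1) vs"] sh by metis
    also have "\<dots> = map (\<lambda>i. (x # xs) ! i) vs" using sh by metis
    finally show ?thesis by simp
  qed
qed

lemma sw_concat:
  "sorted_wrt (\<lambda>x y. x + 2 \<le> y) is \<Longrightarrow> \<forall>i\<in>set is. b < i \<Longrightarrow> \<forall>i\<in>set is. \<forall>y\<in>set rest. Suc i < y
   \<Longrightarrow> sorted_wrt (<) (b # rest) \<Longrightarrow> sorted_wrt (<) (b # concat (map (\<lambda>i. [i, Suc i]) is) @ rest)"
proof (induction "is" arbitrary: b)
  case Nil then show ?case by simp
next
  case (Cons i "is")
  let ?M = "concat (map (\<lambda>i. [i, Suc i]) is) @ rest"
  have "sorted_wrt (<) (Suc i # ?M)"
    using Cons.prems by (intro Cons.IH) auto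
  then have M: "\<forall>y\<in>set ?M. Suc i < y" "sorted_wrt (<) ?M" by simp_all
  have bi: "b < i" using Cons.prems(2) by simp
  have Mi: "\<forall>y\<in>set ?M. i < y"
  proof
    fix y assume "y \<in> set ?M"
    then have "Suc i < y" using M by blast
    then show "i < y" by simp
  qed
  have Mb: "\<forall>y\<in>set ?M. b < y"
  proof
    fix y assume "y \<in> set ?M"
    then have "Suc i < y" using M by blast
    then show "b < y" using bi by simp
  qed
  have eq: "concat (map (\<lambda>i. [i, Suc i]) (i # is)) @ rest = i # Suc i # ?M" by simp
  show ?case unfolding eq using M Mi Mb bi by simp
qed

lemma idx_vertices_props:
  assumes "is \<in> idx_set j q" and jq: "j \<le> q"
  shows "sorted_wrt (<) (idx_vertices j q is)" "\<forall>v\<in>set (idx_vertices j q is). v \<le> q"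
    "length (idx_vertices j q is) = Suc j"
proof -
  have a: "length is = j div 2" "sorted_wrt (\<lambda>x y. x + 2 \<le> y) is"
    "\<forall>i\<in>set is. 1 \<le> i \<and> (if even j then i + 1 \<le> q else i + 2 \<le> q)"
    using assms unfolding idx_set_def by auto
  show "length (idx_vertices j q is) = Suc j" using idx_vertices_length[OF a(1)] .
  show "sorted_wrt (<) (idx_vertices j q is)"
    unfolding idx_vertices_def
    by (rule sw_concat) (use a jq in \<open>auto split: if_splits dest: odd_pos\<close>)
  show "\<forall>v\<in>set (idx_vertices j q is). v \<le> q"
    using a(3) unfolding idx_vertices_def by (auto split: if_splits)
qed

lemma idx_set_sub: "idx_set j q \<subseteq> E q"
  unfolding idx_set_def E_def by (auto split: if_splits)

lemma idx_set_finite: "finite (idx_set j q)"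
  using finite_subset[OF idx_set_sub E_finite] .

lemma mem_simplices:
  assumes K: "branched_complex K" and t: "t \<in> K" "length t = Suc q" and "is": "is \<in> idx_set j q" and jq: "j \<le> q"
  shows "map (\<lambda>i. t ! i) (idx_vertices j q is) \<in> simplices K j"
proof -
  note p = idx_vertices_props[OF "is" jq]
  have eq: "map (\<lambda>i. t ! i) (idx_vertices j q is) = nths t (set (idx_vertices j q is))"
    using p t by (intro map_nth_nths) auto
  have ne: "map (\<lambda>i. t ! i) (idx_vertices j q is) \<noteq> []" using p(3) by auto
  have "nths t (set (idx_vertices j q is)) \<in> K"
    using K t ne eq unfolding branched_complex_def by metis
  moreover have "length (map (\<lambda>i. t ! i) (idx_vertices j q is)) = Suc j" using p(3) by simp
  ultimately show ?thesis using eq unfolding simplices_def by auto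
qed


lemma pairing_expand:
  assumes K: "branched_complex K"
  shows "pairing K j (w_chain K j) (a_cup_delta a j)
       = (\<Sum>t\<in>{t\<in>K. j < length t}. \<Sum>is\<in>idx_set j (length t - 1).
            a_cup_delta a j (map (\<lambda>i. t ! i) (idx_vertices j (length t - 1) is)))"
proof -
  have finK: "finite K" using K unfolding branched_complex_def by blast
  let ?S = "simplices K j"
  let ?T = "{t\<in>K. j < length t}"
  let ?\<phi> = "a_cup_delta a j"
  have finS: "finite ?S" using finK unfolding simplices_def by simp
  have finT: "finite ?T" using finK by simp
  have "pairing K j (w_chain K j) ?\<phi> = (\<Sum>\<sigma>\<in>?S. \<Sum>t\<in>?T. d_chain j t \<sigma> * ?\<phi> \<sigma>)"
    unfolding pairing_def w_chain_def sum_distrib_right ..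
  also have "\<dots> = (\<Sum>t\<in>?T. \<Sum>\<sigma>\<in>?S. d_chain j t \<sigma> * ?\<phi> \<sigma>)"
    by (rule sum.swap)
  also have "\<dots> = (\<Sum>t\<in>?T. \<Sum>is\<in>idx_set j (length t - 1).
            ?\<phi> (map (\<lambda>i. t ! i) (idx_vertices j (length t - 1) is)))"
  proof (rule sum.cong[OF refl])
    fix t assume t: "t \<in> ?T"
    let ?q = "length t - 1"
    let ?m = "\<lambda>is. map (\<lambda>i. t ! i) (idx_vertices j ?q is)"
    have tl: "length t = Suc ?q" using t by auto
    have jq: "j \<le> ?q" using t by auto
    have mem: "?m is \<in> ?S" if "is \<in> idx_set j ?q" for "is"
      using mem_simplices[OF K _ tl that jq] t by blast
    have "(\<Sum>\<sigma>\<in>?S. d_chain j t \<sigma> * ?\<phi> \<sigma>)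
        = (\<Sum>\<sigma>\<in>?S. \<Sum>is\<in>idx_set j ?q. if ?m is = \<sigma> then ?\<phi> \<sigma> else 0)"
      unfolding d_chain_def sum_distrib_right
      by (intro sum.cong refl) simp
    also have "\<dots> = (\<Sum>is\<in>idx_set j ?q. \<Sum>\<sigma>\<in>?S. if ?m is = \<sigma> then ?\<phi> \<sigma> else 0)"
      by (rule sum.swap)
    also have "\<dots> = (\<Sum>is\<in>idx_set j ?q. ?\<phi> (?m is))"
    proof (rule sum.cong[OF refl])
      fix "is" assume "is \<in> idx_set j ?q"
      then show "(\<Sum>\<sigma>\<in>?S. if ?m is = \<sigma> then ?\<phi> \<sigma> else 0) = ?\<phi> (?m is)"
        using mem finS by (simp add: sum.delta)
    qed
    finally show "(\<Sum>\<sigma>\<in>?S. d_chain j t \<sigma> * ?\<phi> \<sigma>) = (\<Sum>is\<in>idx_set j ?q. ?\<phi> (?m is))" .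
  qed
  finally show ?thesis .
qed

theorem proposition5:
  fixes K :: "'v list set" and d :: nat and a :: "'v \<Rightarrow> bit"
  assumes "branched_complex K"
    and "\<forall>s\<in>K. length s \<le> Suc d"
  shows "(\<Sum>k=0..d. \<Sum>s\<in>simplices K k. \<Prod>v\<leftarrow>s. a v)
       = (\<Sum>j=0..d. pairing K j (w_chain K j) (a_cup_delta a j))"
proof -
  have K: "branched_complex K" by fact
  have finK: "finite K" and ne: "\<forall>s\<in>K. s \<noteq> []" using K unfolding branched_complex_def by auto
  have simp_eq: "simplices K k = {s \<in> K. length s - 1 = k}" for k
    using ne unfolding simplices_def by (auto simp: Suc_diff_Suc)
  have L: "(\<Sum>k=0..d. \<Sum>s\<in>simplices K k. \<Prod>v\<leftarrow>s. a v) = (\<Sum>s\<in>K. \<Prod>v\<leftarrow>s. a v)"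
    unfolding simp_eq
  proof (rule sum.group)
    show "(\<lambda>s. length s - 1) ` K \<subseteq> {0..d}" using assms(2) by force
  qed (auto simp: finK)
  have "(\<Sum>j=0..d. pairing K j (w_chain K j) (a_cup_delta a j))
      = (\<Sum>j=0..d. \<Sum>t\<in>{t\<in>K. j < length t}. \<Sum>is\<in>idx_set j (length t - 1).
            a_cup_delta a j (map (\<lambda>i. t ! i) (idx_vertices j (length t - 1) is)))"
    using pairing_expand[OF K] by simp
  also have "\<dots> = (\<Sum>t\<in>K. \<Sum>j\<in>{j\<in>{0..d}. j < length t}. \<Sum>is\<in>idx_set j (length t - 1).
            a_cup_delta a j (map (\<lambda>i. t ! i) (idx_vertices j (length t - 1) is)))"
    by (rule sum.swap_restrict) (auto simp: finK)
  also have "\<dots> = (\<Sum>t\<in>K. \<Prod>v\<leftarrow>t. a v)"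
  proof (rule sum.cong[OF refl])
    fix t assume t: "t \<in> K"
    have tl: "length t = Suc (length t - 1)" using ne t by auto
    have "{j\<in>{0..d}. j < length t} = {..<Suc (length t - 1)}"
      using assms(2) t tl by auto
    then show "(\<Sum>j\<in>{j\<in>{0..d}. j < length t}. \<Sum>is\<in>idx_set j (length t - 1).
            a_cup_delta a j (map (\<lambda>i. t ! i) (idx_vertices j (length t - 1) is))) = (\<Prod>v\<leftarrow>t. a v)"
      using per_t[OF tl, of a] by simp
  qed
  finally show ?thesis using L by simp
qed

end
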